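(* For every nonempty face $F$ of $V_0$, the codimension of $F$ in $\mathcal F$ equals $\operatorname{genus}(\phi(F))$.
   Context: Let $\mathcal M$ be a regular matroid on a finite ground set $E$, represented by a totally unimodular matrix $M$ with columns $c_e$; $\mathcal F=\ker M\subseteq\mathbb R^E$ with Euclidean inner product, $\Lambda=\ker M\cap\mathbb Z^E$, $V_0=\{x\in\mathcal F:\|x\|\le\|x-\lambda\|\ \forall\lambda\in\Lambda\}$. A circuit in $\Lambda$ is a flow with coordinates in $\{-1,0,1\}$ whose support is a circuit (minimal dependent set of columns) of $\mathcal M$; $\Xi$ is the set of these; $F_\gamma=\{x\in\mathcal F:2\langle x,\gamma\rangle=\|\gamma\|^2\}$. For a nonempty face $F$ of $V_0$, $\mathcal U(F)=\{\gamma\in\Xi:F\subseteq F_\gamma\}$ and $\phi(F)=(S,\varepsilon)$ with $S=\bigcup_{\gamma\in\mathcal U(F)}\operatorname{supp}\gamma$ and $\varepsilon_e=\operatorname{sgn}\gamma_e$ for any $\gamma\in\mathcal U(F)$ containing $e$ (well defined). The genus of $(S,\varepsilon)$ is $\dim\ker M_S$, $M_S$ being the submatrix of columns indexed by $S$. *)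

theory Defs
  imports "HOL-Analysis.Analysis"
begin

text \<open>Ground set E is the finite type 'e; the matrix M has rows indexed by the finite
type 'r and columns c_e indexed by e.\<close>

definition sq_det :: "nat \<Rightarrow> (nat \<Rightarrow> nat \<Rightarrow> real) \<Rightarrow> real" where
  "sq_det k A = (\<Sum>p | p permutes {..<k}. of_int (sign p) * (\<Prod>i<k. A i (p i)))"

definition totally_unimodular :: "real^'e^'r \<Rightarrow> bool" where
  "totally_unimodular M \<longleftrightarrow>
     (\<forall>k (ri :: nat \<Rightarrow> 'r) (ci :: nat \<Rightarrow> 'e). inj_on ri {..<k} \<longrightarrow> inj_on ci {..<k} \<longrightarrow>
        sq_det k (\<lambda>i j. M $ ri i $ ci j) \<in> {-1, 0, 1})"

definition flows :: "real^'e^'r \<Rightarrow> (real^'e) set" where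
  "flows M = {x. M *v x = 0}"

definition flow_lattice :: "real^'e^'r \<Rightarrow> (real^'e) set" where
  "flow_lattice M = {x \<in> flows M. \<forall>e. x $ e \<in> \<int>}"

definition voronoi0 :: "real^'e^'r \<Rightarrow> (real^'e) set" where
  "voronoi0 M = {x \<in> flows M. \<forall>l \<in> flow_lattice M. norm x \<le> norm (x - l)}"

definition supp :: "real^'e \<Rightarrow> 'e set" where
  "supp x = {e. x $ e \<noteq> 0}"

definition col_dependent :: "real^'e^'r \<Rightarrow> 'e set \<Rightarrow> bool" where
  "col_dependent M S \<longleftrightarrow> (\<exists>x. x \<noteq> 0 \<and> supp x \<subseteq> S \<and> M *v x = 0)"

definition matroid_circuit :: "real^'e^'r \<Rightarrow> 'e set \<Rightarrow> bool" where
  "matroid_circuit M S \<longleftrightarrow> col_dependent M S \<and> (\<forall>T. T \<subset> S \<longrightarrow> \<not> col_dependent M T)"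

definition lattice_circuits :: "real^'e^'r \<Rightarrow> (real^'e) set" where
  "lattice_circuits M = {g \<in> flow_lattice M. (\<forall>e. g $ e \<in> {-1, 0, 1}) \<and> matroid_circuit M (supp g)}"

definition Fgamma :: "real^'e^'r \<Rightarrow> real^'e \<Rightarrow> (real^'e) set" where
  "Fgamma M g = {x \<in> flows M. 2 * (x \<bullet> g) = (norm g)^2}"

definition Ucirc :: "real^'e^'r \<Rightarrow> (real^'e) set \<Rightarrow> (real^'e) set" where
  "Ucirc M F = {g \<in> lattice_circuits M. F \<subseteq> Fgamma M g}"

definition phi :: "real^'e^'r \<Rightarrow> (real^'e) set \<Rightarrow> 'e set \<times> ('e \<Rightarrow> real)" where
  "phi M F = (let S = \<Union>g \<in> Ucirc M F. supp g in
     (S, \<lambda>e. if e \<in> S then sgn ((SOME g. g \<in> Ucirc M F \<and> e \<in> supp g) $ e) else 0))"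

text \<open>genus (S, eps) = dim ker M_S; ker M_S is identified with the vectors supported in S
lying in ker M.\<close>
definition genus :: "real^'e^'r \<Rightarrow> 'e set \<times> ('e \<Rightarrow> real) \<Rightarrow> nat" where
  "genus M Se = dim {x :: real^'e. supp x \<subseteq> fst Se \<and> M *v x = 0}"

definition codim_in_flows :: "real^'e^'r \<Rightarrow> (real^'e) set \<Rightarrow> int" where
  "codim_in_flows M F = int (dim (flows M)) - aff_dim F"

end

theory Submission
  imports Defs "Jordan_Normal_Form.Determinant"
begin

no_notation Matrix.vec_index (infixl "$" 100)


definition l1 :: "real^'e \<Rightarrow> real" where "l1 v = (\<Sum>e\<in>UNIV. \<bar>v$e\<bar>)"
definition conf :: "real^'e \<Rightarrow> real^'e \<Rightarrow> bool" where
  "conf w v \<longleftrightarrow> (\<forall>e. w$e \<noteq> 0 \<longrightarrow> w$e * v$e > 0)"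

lemma flows_subspace: "subspace (flows M)"
  unfolding subspace_def flows_def by (auto simp: matrix_vector_right_distrib matrix_vector_mult_scaleR)

lemma mv_nth: "(M *v x) $ r = (\<Sum>e\<in>UNIV. M$r$e * x$e)" by (simp add: matrix_vector_mult_def)

lemma conf_trans: "conf w u \<Longrightarrow> conf u v \<Longrightarrow> conf w v"
  unfolding conf_def
proof (intro allI impI)
  fix e assume a: "\<forall>e. w $ e \<noteq> 0 \<longrightarrow> 0 < w $ e * u $ e" "\<forall>e. u $ e \<noteq> 0 \<longrightarrow> 0 < u $ e * v $ e" "w$e \<noteq> 0"
  then have 1: "0 < w $ e * u $ e" by auto
  then have "u$e \<noteq> 0" by auto
  then have 2: "0 < u $ e * v $ e" using a by auto
  from 1 2 show "0 < w $ e * v $ e" by (auto simp: zero_less_mult_iff)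
qed

lemma conf_supp: "conf w v \<Longrightarrow> supp w \<subseteq> supp v"
  unfolding conf_def supp_def by auto

lemma conf_refl: "conf v v"
  unfolding conf_def by (auto simp: zero_less_mult_iff)

lemma conformal_circuit_exists:
  assumes "v \<in> flows M" "v \<noteq> 0"
  shows "\<exists>u\<in>flows M. u \<noteq> 0 \<and> conf u v \<and> matroid_circuit M (supp u)"
proof -
  let ?Q = "\<lambda>u. u \<in> flows M \<and> u \<noteq> 0 \<and> conf u v"
  have "?Q v" using assms conf_refl by auto
  then obtain u where u: "?Q u" and umin: "\<And>y. ?Q y \<Longrightarrow> card (supp u) \<le> card (supp y)"
    using ex_has_least_nat[of ?Q v "\<lambda>u. card (supp u)"] by blast
  have "matroid_circuit M (supp u)"
    unfolding matroid_circuit_def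
  proof (intro conjI allI impI notI)
    show "col_dependent M (supp u)" unfolding col_dependent_def using u by (auto simp: flows_def)
  next
    fix T assume T: "T \<subset> supp u" and dep: "col_dependent M T"
    then obtain z0 where z0: "z0 \<noteq> 0" "supp z0 \<subseteq> T" "M *v z0 = 0" unfolding col_dependent_def by auto
    obtain e0 where e0: "z0$e0 \<noteq> 0" using z0(1) by (metis Finite_Cartesian_Product.vec_eq_iff zero_index)
    have "e0 \<in> supp u" using e0 z0(2) T unfolding supp_def by auto
    then have ue0: "u$e0 \<noteq> 0" unfolding supp_def by auto
    obtain z where z: "z \<noteq> 0" "supp z \<subseteq> T" "M *v z = 0" "z$e0 * u$e0 > 0"
    proof (cases "z0$e0 * u$e0 > 0")
      case True then show ?thesis using that z0 by auto
    next
      case False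
      have "z0$e0 * u$e0 \<noteq> 0" using e0 ue0 by simp
      then have "z0$e0 * u$e0 < 0" using False by linarith
      then have "(-z0)$e0 * u$e0 > 0" by simp
      moreover have "supp (-z0) = supp z0" unfolding supp_def by auto
      ultimately show ?thesis using that[of "-z0"] z0 by (auto simp: Finite_Cartesian_Product.vec_eq_iff matrix_vector_mult_def sum_negf)
    qed
    define P where "P = {e. z$e * u$e > 0}"
    have Pne: "e0 \<in> P" using z unfolding P_def by auto
    have finP: "finite P" by simp
    define t where "t = Min ((\<lambda>e. u$e / z$e) ` P)"
    have "t \<in> (\<lambda>e. u$e / z$e) ` P"
      using Min_in[of "(\<lambda>e. u$e / z$e) ` P"] Pne finP unfolding t_def by blast
    then obtain e1 where e1: "e1 \<in> P" "t = u$e1 / z$e1" by blast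
    have tle: "\<And>e. e \<in> P \<Longrightarrow> t \<le> u$e / z$e" unfolding t_def using finP by auto
    have ratpos: "\<And>e. e \<in> P \<Longrightarrow> u$e / z$e > 0" unfolding P_def
        by (simp add: zero_less_divide_iff zero_less_mult_iff) blast
    have tpos: "t > 0" using ratpos e1 by auto
    define u' where "u' = u - t *\<^sub>R z"
    have zsub: "\<And>e. u$e = 0 \<Longrightarrow> z$e = 0" using z(2) T unfolding supp_def by auto
    have key: "\<And>e. u'$e * u$e \<ge> 0"
    proof -
      fix e
      show "u'$e * u$e \<ge> 0"
      proof (cases "e \<in> P")
        case True
        then have zu: "z$e * u$e > 0" unfolding P_def by auto
        have "t \<le> u$e / z$e" using tle True by auto
        then have "t * (z$e * u$e) \<le> (u$e / z$e) * (z$e * u$e)" using zu by (intro mult_right_mono) auto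
        also have "\<dots> = u$e * u$e" using zu by (auto simp: field_simps)
        finally show ?thesis unfolding u'_def by (simp add: algebra_simps)
      next
        case False
        then have "z$e * u$e \<le> 0" unfolding P_def by auto
        then have "t * (z$e * u$e) \<le> 0" using tpos by (simp add: mult_nonneg_nonpos)
        then show ?thesis unfolding u'_def by (simp add: algebra_simps) (smt (verit) zero_le_square)
      qed
    qed
    have cu: "conf u' u" unfolding conf_def
    proof (intro allI impI)
      fix e assume "u'$e \<noteq> 0"
      moreover have "u$e \<noteq> 0"
      proof
        assume "u$e = 0" then have "z$e = 0" using zsub by auto
        then have "u'$e = 0" using \<open>u$e = 0\<close> unfolding u'_def by auto
        then show False using \<open>u'$e \<noteq> 0\<close> by auto
      qed
      ultimately show "u'$e * u$e > 0" using key[of e] by (simp add: less_le)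
    qed
    have u'flow: "u' \<in> flows M" using u z unfolding u'_def flows_def
      by (simp add: matrix_vector_mult_diff_distrib matrix_vector_mult_scaleR)
    obtain e2 where e2: "e2 \<in> supp u" "e2 \<notin> T" using T by auto
    have "z$e2 = 0" using e2 z(2) unfolding supp_def by auto
    then have "u'$e2 = u$e2" unfolding u'_def by simp
    then have "u' \<noteq> 0" using e2 unfolding supp_def by auto
    then have Qu': "?Q u'" using u'flow conf_trans[OF cu] u by auto
    have "u'$e1 = 0" using e1 Pne unfolding u'_def P_def by (auto simp: field_simps)
    moreover have "e1 \<in> supp u" using e1 zsub unfolding P_def supp_def by auto
    ultimately have "supp u' \<subset> supp u" using conf_supp[OF cu] unfolding supp_def by auto
    then have "card (supp u') < card (supp u)" by (simp add: psubset_card_mono)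
    with umin[OF Qu'] show False by auto
  qed
  then show ?thesis using u by auto
qed





lemma sq_det_det: "sq_det k A = Determinant.det (Matrix.mat k k (\<lambda>(i,j). A i j))"
  unfolding sq_det_def Determinant.det_def
  by (auto intro!: sum.cong prod.cong simp: atLeast0LessThan permutes_def)

lemma tu_circuit_equal_abs:
  fixes M :: "real^'e^'r"
  assumes TU: "totally_unimodular M" and u0: "M *v u = 0"
    and circ: "matroid_circuit M (supp u)" and e: "e \<in> supp u" and f: "f \<in> supp u"
  shows "\<bar>u$e\<bar> = \<bar>u$f\<bar>"
proof (cases "e = f")
  case True then show ?thesis by simp
next
  case False
  define C where "C = supp u"
  define C' where "C' = C - {f}"
  define k where "k = card C'"
  have eC': "e \<in> C'" using e False unfolding C'_def C_def by auto
  have fC: "f \<in> C" using f unfolding C_def by auto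
  have indep: "\<not> col_dependent M C'"
    using circ fC unfolding matroid_circuit_def C_def C'_def by auto
  define \<rho> :: "'r \<Rightarrow> real^'e" where "\<rho> r = (\<chi> e. if e \<in> C' then M$r$e else 0)" for r
  define P where "P = {y :: real^'e. supp y \<subseteq> C'}"
  have rho_inner: "\<rho> r \<bullet> y = (M *v y)$r" if "y \<in> P" for r y
  proof -
    have "\<rho> r \<bullet> y = (\<Sum>i\<in>UNIV. (if i \<in> C' then M$r$i else 0) * y$i)"
      unfolding inner_vec_def \<rho>_def by simp
    also have "\<dots> = (\<Sum>i\<in>UNIV. M$r$i * y$i)"
      using that unfolding P_def supp_def by (intro sum.cong) auto
    finally show ?thesis by (simp add: mv_nth)
  qed
  define A0 where "A0 = (\<lambda>e. axis e (1::real)) ` C'"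
  have subP: "subspace P" unfolding subspace_def P_def supp_def
  proof (intro conjI ballI allI)
    fix x y :: "real^'e" assume "x \<in> {y. {e. y $ e \<noteq> 0} \<subseteq> C'}" "y \<in> {y. {e. y $ e \<noteq> 0} \<subseteq> C'}"
    then have "\<And>t. t \<notin> C' \<Longrightarrow> x$t = 0 \<and> y$t = 0" by auto
    then show "x + y \<in> {y. {e. y $ e \<noteq> 0} \<subseteq> C'}" by (auto, metis add.right_neutral)
  qed auto
  have A0P: "A0 \<subseteq> P" unfolding A0_def P_def supp_def by (auto simp: axis_def split: if_splits)
  have PA0: "P \<subseteq> span A0"
  proof
    fix y assume y: "y \<in> P"
    have "y = (\<Sum>e\<in>C'. y$e *\<^sub>R axis e (1::real))"
    proof (subst Finite_Cartesian_Product.vec_eq_iff, intro allI)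
      fix i
      have "(\<Sum>e\<in>C'. y$e *\<^sub>R axis e (1::real)) $ i = (\<Sum>e\<in>C'. y$e * (if i = e then 1 else 0))"
        by (simp add: axis_def)
      also have "\<dots> = (if i \<in> C' then y$i else 0)"
        by (simp add: if_distrib[of "\<lambda>x. _ * x"] cong: if_cong)
      also have "\<dots> = y$i" using y unfolding P_def supp_def by auto
      finally show "y $ i = (\<Sum>e\<in>C'. y$e *\<^sub>R axis e (1::real)) $ i" by simp
    qed
    also have "\<dots> \<in> span A0"
      by (intro span_sum span_scale span_base) (auto simp: A0_def)
    finally show "y \<in> span A0" .
  qed
  have spanA0: "span A0 = P"
    using PA0 span_minimal[OF A0P subP] by auto
  have indA0: "independent A0"
    by (rule independent_mono[OF independent_Basis]) (auto simp: A0_def axis_in_Basis_iff)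
  have injax: "inj_on (\<lambda>e. axis e (1::real)) C'"
    by (auto simp: inj_on_def axis_def Finite_Cartesian_Product.vec_eq_iff)
  have cardA0: "card A0 = k" unfolding A0_def k_def using card_image[OF injax] by simp
  have rhoP: "range \<rho> \<subseteq> P" unfolding P_def supp_def \<rho>_def by (auto split: if_splits)
  have span_rho: "span (range \<rho>) = P"
  proof (rule ccontr)
    assume ne: "span (range \<rho>) \<noteq> P"
    have "span (range \<rho>) \<subseteq> P" using span_minimal[OF rhoP subP] .
    with ne have "span (range \<rho>) \<subset> span A0" using spanA0 by auto
    then obtain x where x: "x \<noteq> 0" "x \<in> span A0" "\<And>y. y \<in> span (range \<rho>) \<Longrightarrow> Linear_Algebra.orthogonal x y"
      using orthogonal_to_subspace_exists_gen by metis
    have xP: "x \<in> P" using x(2) spanA0 by auto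
    have "M *v x = 0"
    proof (subst Finite_Cartesian_Product.vec_eq_iff, intro allI)
      fix r
      have "Linear_Algebra.orthogonal x (\<rho> r)" using x(3)[of "\<rho> r"] by (simp add: span_base)
      then have "\<rho> r \<bullet> x = 0" unfolding Linear_Algebra.orthogonal_def by (simp add: inner_commute)
      then show "(M *v x) $ r = 0 $ r" using rho_inner[OF xP] by simp
    qed
    then have "col_dependent M C'" unfolding col_dependent_def using x xP unfolding P_def by auto
    with indep show False by auto
  qed
  obtain B where B: "B \<subseteq> range \<rho>" "independent B" "range \<rho> \<subseteq> span B" "card B = dim (range \<rho>)"
    by (rule basis_exists)
  have "dim (range \<rho>) = k"
  proof -
    have "dim (range \<rho>) = dim (span (range \<rho>))" by simp
    also have "\<dots> = dim (span A0)" using span_rho spanA0 by simp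
    also have "\<dots> = k" using dim_span_eq_card_independent[OF indA0] cardA0 by simp
    finally show ?thesis .
  qed
  then have cardB: "card B = k" using B(4) by simp
  have finB: "finite B" using independent_bound[OF B(2)] by simp
  have finC': "finite C'" by simp
  obtain ci where ci: "bij_betw ci {0..<k} C'" using ex_bij_betw_nat_finite[OF finC'] unfolding k_def by blast
  obtain bi where bi: "bij_betw bi {0..<k} B" using ex_bij_betw_nat_finite[OF finB] cardB by blast
  define rowof where "rowof b = (SOME r. \<rho> r = b)" for b
  have rowof: "\<rho> (rowof b) = b" if "b \<in> B" for b
    using B(1) that unfolding rowof_def by (metis (mono_tags, lifting) image_iff someI subsetD)
  define ri where "ri i = rowof (bi i)" for i
  have rhori: "\<rho> (ri i) = bi i" if "i < k" for i
    using rowof bi that unfolding ri_def bij_betw_def by auto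
  have injri: "inj_on ri {..<k}"
  proof (rule inj_onI)
    fix i j assume ij: "i \<in> {..<k}" "j \<in> {..<k}" "ri i = ri j"
    then have "bi i = bi j" using rhori by (metis lessThan_iff)
    then show "i = j" using bi ij unfolding bij_betw_def inj_on_def by auto
  qed
  have injci: "inj_on ci {..<k}" using ci unfolding bij_betw_def by (simp add: atLeast0LessThan)
  define A :: "real mat" where "A = Matrix.mat k k (\<lambda>(i,j). M $ ri i $ ci j)"
  have Acar: "A \<in> carrier_mat k k" unfolding A_def by simp
  have detA: "Determinant.det A \<in> {-1, 0, 1}"
  proof -
    have "sq_det k (\<lambda>i j. M $ ri i $ ci j) \<in> {-1, 0, 1}"
      using TU injri injci unfolding totally_unimodular_def by blast
    then show ?thesis unfolding A_def sq_det_det by simp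
  qed
  have sum_reidx: "(\<Sum>j\<in>{0..<k}. g (ci j)) = (\<Sum>e\<in>C'. g e)" for g :: "'e \<Rightarrow> real"
    using sum.reindex_bij_betw[OF ci] .
  have detA0: "Determinant.det A \<noteq> 0"
  proof
    assume "Determinant.det A = 0"
    then obtain v where v: "v \<in> carrier_vec k" "v \<noteq> 0\<^sub>v k" "A *\<^sub>v v = 0\<^sub>v k"
      using det_0_iff_vec_prod_zero_field[OF Acar] by auto
    define cinv where "cinv = the_inv_into {0..<k} ci"
    have cinv: "cinv e' < k" "ci (cinv e') = e'" if "e' \<in> C'" for e'
      using that ci unfolding cinv_def
      by (auto simp: bij_betw_def the_inv_into_f_f f_the_inv_into_f the_inv_into_into)
    have cinvci: "cinv (ci j) = j" if "j < k" for j
      using that ci unfolding cinv_def bij_betw_def by (auto simp: the_inv_into_f_f)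
    define y :: "real^'e" where "y = (\<chi> e'. if e' \<in> C' then vec_index v (cinv e') else 0)"
    have yP: "y \<in> P" unfolding P_def supp_def y_def by auto
    have y0: "y \<noteq> 0"
    proof
      assume "y = 0"
      have "v = 0\<^sub>v k"
      proof (rule eq_vecI)
        fix j assume j: "j < dim_vec (0\<^sub>v k :: real vec)"
        then have jk: "j < k" by simp
        have "ci j \<in> C'" using ci jk unfolding bij_betw_def by auto
        then have "y $ ci j = vec_index v j" unfolding y_def using cinvci[OF jk] by simp
        then show "vec_index v j = vec_index (0\<^sub>v k) j" using \<open>y = 0\<close> jk by simp
      qed (use v in auto)
      with v show False by auto
    qed
    have orthB: "\<forall>b\<in>B. b \<bullet> y = 0"
    proof
      fix b assume b: "b \<in> B"
      have "b \<in> bi ` {0..<k}" using bi b by (simp add: bij_betw_def)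
      then obtain i where i: "i < k" "bi i = b" by auto
      have "b \<bullet> y = \<rho> (ri i) \<bullet> y" using rhori[OF i(1)] i(2) by simp
      also have "\<dots> = (M *v y) $ ri i" using rho_inner[OF yP] by simp
      also have "\<dots> = (\<Sum>e'\<in>UNIV. M $ ri i $ e' * y $ e')" by (simp add: mv_nth)
      also have "\<dots> = (\<Sum>e'\<in>C'. M $ ri i $ e' * y $ e')"
        by (rule sum.mono_neutral_right) (auto simp: y_def)
      also have "\<dots> = (\<Sum>j\<in>{0..<k}. M $ ri i $ ci j * y $ ci j)"
        using sum_reidx[of "\<lambda>e'. M $ ri i $ e' * y $ e'"] by simp
      also have "\<dots> = (\<Sum>j\<in>{0..<k}. M $ ri i $ ci j * vec_index v j)"
        using ci cinvci unfolding y_def bij_betw_def by (intro sum.cong) auto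
      also have "\<dots> = vec_index (A *\<^sub>v v) i"
        using i v(1) unfolding A_def by (simp add: scalar_prod_def)
      also have "\<dots> = 0" unfolding v(3) using i by simp
      finally show "b \<bullet> y = 0" .
    qed
    have "M *v y = 0"
    proof (subst Finite_Cartesian_Product.vec_eq_iff, intro allI)
      fix r
      have "\<rho> r \<in> span B" using B(3) by auto
      then have "Linear_Algebra.orthogonal y (\<rho> r)"
        by (rule orthogonal_to_span) (use orthB in \<open>auto simp: Linear_Algebra.orthogonal_def inner_commute\<close>)
      then have "\<rho> r \<bullet> y = 0" unfolding Linear_Algebra.orthogonal_def by (simp add: inner_commute)
      then show "(M *v y) $ r = 0 $ r" using rho_inner[OF yP] by simp
    qed
    then have "col_dependent M C'" unfolding col_dependent_def using y0 yP unfolding P_def by blast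
    with indep show False by auto
  qed
  have uf: "u$f \<noteq> 0" using f unfolding supp_def by auto
  have "e \<in> ci ` {0..<k}" using ci eC' by (simp add: bij_betw_def)
  then obtain j0 where j0: "j0 < k" "ci j0 = e" by auto
  define xv :: "real vec" where "xv = Matrix.vec k (\<lambda>j. u $ ci j / (- u$f))"
  define bv :: "real vec" where "bv = Matrix.vec k (\<lambda>i. M $ ri i $ f)"
  have Axv: "A *\<^sub>v xv = bv"
  proof (rule eq_vecI)
    fix i assume "i < dim_vec bv"
    then have i: "i < k" unfolding bv_def by simp
    have "vec_index (A *\<^sub>v xv) i = (\<Sum>j\<in>{0..<k}. M $ ri i $ ci j * (u $ ci j / (- u$f)))"
      using i unfolding A_def xv_def by (simp add: scalar_prod_def)
    also have "\<dots> = (\<Sum>j\<in>{0..<k}. M $ ri i $ ci j * u $ ci j) / (- u$f)"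
      by (simp add: sum_divide_distrib sum_negf)
    also have "\<dots> = (\<Sum>e'\<in>C'. M $ ri i $ e' * u $ e') / (- u$f)"
      using sum_reidx[of "\<lambda>e'. M $ ri i $ e' * u $ e'"] by simp
    also have "(\<Sum>e'\<in>C'. M $ ri i $ e' * u $ e') = - (M $ ri i $ f * u $ f)"
    proof -
      have "0 = (M *v u) $ ri i" using u0 by simp
      also have "\<dots> = (\<Sum>e'\<in>UNIV. M $ ri i $ e' * u $ e')" by (simp add: mv_nth)
      also have "\<dots> = (\<Sum>e'\<in>C. M $ ri i $ e' * u $ e')"
        by (rule sum.mono_neutral_right) (auto simp: C_def supp_def)
      also have "\<dots> = M $ ri i $ f * u $ f + (\<Sum>e'\<in>C'. M $ ri i $ e' * u $ e')"
        unfolding C'_def using fC by (simp add: sum.remove)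
      finally show ?thesis by simp
    qed
    also have "- (M $ ri i $ f * u $ f) / (- u$f) = M $ ri i $ f" using uf by simp
    finally show "vec_index (A *\<^sub>v xv) i = vec_index bv i" unfolding bv_def using i by simp
  qed (simp add: A_def bv_def)
  have xvc: "xv \<in> carrier_vec k" unfolding xv_def by simp
  have cr: "Determinant.det (replace_col A bv j0) = vec_index xv j0 * Determinant.det A"
    using cramer_lemma_mat[OF Acar xvc j0(1)] Axv by simp
  define ci' where "ci' = ci(j0 := f)"
  have injci': "inj_on ci' {..<k}"
  proof -
    have "f \<notin> ci ` ({..<k} - {j0})" using ci unfolding bij_betw_def C'_def by (auto simp: atLeast0LessThan)
    then show ?thesis unfolding ci'_def using injci by (auto simp: inj_on_def)
  qed
  have repl: "replace_col A bv j0 = Matrix.mat k k (\<lambda>(i,j). M $ ri i $ ci' j)"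
    unfolding replace_col_def A_def bv_def ci'_def by (rule eq_matI) auto
  have detR: "Determinant.det (replace_col A bv j0) \<in> {-1, 0, 1}"
  proof -
    have "sq_det k (\<lambda>i j. M $ ri i $ ci' j) \<in> {-1, 0, 1}"
      using TU injri injci' unfolding totally_unimodular_def by blast
    then show ?thesis unfolding repl sq_det_det by simp
  qed
  have xj0: "vec_index xv j0 = u $ e / (- u $ f)" unfolding xv_def using j0 by simp
  have ue: "u$e \<noteq> 0" using e unfolding supp_def by auto
  have nz: "vec_index xv j0 \<noteq> 0" using xj0 ue uf by simp
  have aA: "\<bar>Determinant.det A\<bar> = 1" using detA detA0 by auto
  have "Determinant.det (replace_col A bv j0) \<noteq> 0" unfolding cr using nz detA0 by simp
  then have aR: "\<bar>Determinant.det (replace_col A bv j0)\<bar> = 1" using detR by auto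
  have "\<bar>vec_index xv j0\<bar> * \<bar>Determinant.det A\<bar> = \<bar>Determinant.det (replace_col A bv j0)\<bar>"
    unfolding cr by (simp add: abs_mult)
  then have x1: "\<bar>vec_index xv j0\<bar> = 1" using aA aR by simp
  have "\<bar>u $ e\<bar> / \<bar>u $ f\<bar> = \<bar>vec_index xv j0\<bar>" unfolding xj0 by (simp add: abs_divide)
  then have "\<bar>u $ e\<bar> / \<bar>u $ f\<bar> = 1" using x1 ue by simp
  moreover have "\<bar>u $ f\<bar> > 0" using uf by simp
  ultimately show ?thesis by (simp add: field_simps)
qed




lemma finite_pm1: "finite {v :: real^'e. \<forall>e. v$e \<in> {-1, 0, 1}}"
proof -
  have "{v :: real^'e. \<forall>e. v$e \<in> {-1, 0, 1}} \<subseteq> (\<lambda>f. \<chi> e. f e) ` (UNIV \<rightarrow>\<^sub>E {-1, 0, 1})"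
  proof
    fix v :: "real^'e" assume "v \<in> {v. \<forall>e. v$e \<in> {-1, 0, 1}}"
    then have "(\<lambda>e. v$e) \<in> UNIV \<rightarrow>\<^sub>E {-1, 0, 1}" by auto
    moreover have "v = (\<chi> e. (\<lambda>e. v$e) e)" by simp
    ultimately show "v \<in> (\<lambda>f. \<chi> e. f e) ` (UNIV \<rightarrow>\<^sub>E {-1, 0, 1})" by blast
  qed
  moreover have "finite ((\<lambda>f. \<chi> e. f e) ` (UNIV \<rightarrow>\<^sub>E ({-1, 0, 1::real})) :: (real^'e) set)"
    by (intro finite_imageI finite_PiE) auto
  ultimately show ?thesis by (rule finite_subset)
qed

lemma finite_Xi: "finite (lattice_circuits M)"
  by (rule finite_subset[OF _ finite_pm1]) (auto simp: lattice_circuits_def)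

lemma Xi_flows: "g \<in> lattice_circuits M \<Longrightarrow> g \<in> flows M"
  unfolding lattice_circuits_def flow_lattice_def by auto

lemma Xi_pm1: "g \<in> lattice_circuits M \<Longrightarrow> g$e \<in> {-1, 0, 1}"
  unfolding lattice_circuits_def by auto

lemma pm1_norm: assumes "\<And>e. g$e \<in> {-1, 0, 1::real}" shows "(norm g)^2 = l1 g"
proof -
  have "(norm g)^2 = g \<bullet> g" by (simp add: power2_norm_eq_inner)
  also have "\<dots> = (\<Sum>e\<in>UNIV. g$e * g$e)" unfolding inner_vec_def by simp
  also have "\<dots> = (\<Sum>e\<in>UNIV. \<bar>g$e\<bar>)"
  proof (rule sum.cong)
    fix e show "g$e * g$e = \<bar>g$e\<bar>" using assms[of e] by auto
  qed simp
  finally show ?thesis unfolding l1_def .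
qed

lemma Xi_norm: "g \<in> lattice_circuits M \<Longrightarrow> (norm g)^2 = l1 g"
  using pm1_norm Xi_pm1 by blast

lemma conf_sgn: assumes "conf g v" shows "sgn (v$e) * g$e = \<bar>g$e\<bar>"
proof (cases "g$e = 0")
  case False
  then have "g$e * v$e > 0" using assms unfolding conf_def by auto
  then show ?thesis by (auto simp: zero_less_mult_iff sgn_if)
qed simp

lemma l1_sgn: "l1 v = (\<Sum>e\<in>UNIV. sgn (v$e) * v$e)"
  unfolding l1_def by (simp add: abs_sgn mult.commute)

lemma circuit_exists:
  assumes TU: "totally_unimodular M" and v: "v \<in> flows M" "v \<noteq> 0"
  shows "\<exists>g\<in>lattice_circuits M. g \<noteq> 0 \<and> conf g v"
proof -
  obtain u where u: "u \<in> flows M" "u \<noteq> 0" "conf u v" "matroid_circuit M (supp u)"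
    using conformal_circuit_exists[OF v] by blast
  obtain f where f: "u$f \<noteq> 0" using u(2) by (metis Finite_Cartesian_Product.vec_eq_iff zero_index)
  have fs: "f \<in> supp u" using f unfolding supp_def by auto
  have u0: "M *v u = 0" using u(1) unfolding flows_def by auto
  define c where "c = \<bar>u$f\<bar>"
  have cpos: "c > 0" using f unfolding c_def by auto
  define g where "g = (1/c) *\<^sub>R u"
  have gi: "g$e = u$e / c" for e unfolding g_def by simp
  have gpm: "g$e \<in> {-1, 0, 1}" for e
  proof (cases "u$e = 0")
    case True then show ?thesis using gi by simp
  next
    case False
    then have "e \<in> supp u" unfolding supp_def by auto
    then have "\<bar>u$e\<bar> = c" unfolding c_def using tu_circuit_equal_abs[OF TU u0 u(4) _ fs] by auto
    then have "u$e = c \<or> u$e = -c" by auto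
    then show ?thesis using gi cpos by auto
  qed
  have suppg: "supp g = supp u" unfolding supp_def using gi cpos by auto
  have gflow: "g \<in> flows M" using u(1) unfolding g_def flows_def by (simp add: matrix_vector_mult_scaleR)
  have gint: "\<forall>e. g$e \<in> \<int>"
  proof
    fix e
    have "g$e = -1 \<or> g$e = 0 \<or> g$e = 1" using gpm[of e] by auto
    then show "g$e \<in> \<int>" by (metis Ints_0 Ints_1 Ints_minus)
  qed
  have "conf g u" unfolding conf_def using gi cpos
    by (auto simp: zero_less_mult_iff zero_less_divide_iff)
  then have "conf g v" using conf_trans u(3) by blast
  moreover have "g \<in> lattice_circuits M"
    unfolding lattice_circuits_def flow_lattice_def using gflow gint gpm suppg u(4) by auto
  moreover have "g \<noteq> 0" using suppg fs unfolding supp_def by auto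
  ultimately show ?thesis by blast
qed

lemma decomp:
  assumes TU: "totally_unimodular M"
  shows "v \<in> flows M \<Longrightarrow> \<exists>\<alpha>. (\<forall>g. \<alpha> g \<ge> 0) \<and> (\<forall>g\<in>lattice_circuits M. \<alpha> g \<noteq> 0 \<longrightarrow> conf g v)
     \<and> v = (\<Sum>g\<in>lattice_circuits M. \<alpha> g *\<^sub>R g)"
proof (induction "card (supp v)" arbitrary: v rule: less_induct)
  case less
  show ?case
  proof (cases "v = 0")
    case True then show ?thesis by (intro exI[of _ "\<lambda>_. 0"]) auto
  next
    case False
    obtain \<gamma> where \<gamma>: "\<gamma> \<in> lattice_circuits M" "\<gamma> \<noteq> 0" "conf \<gamma> v"
      using circuit_exists[OF TU less.prems False] by blast
    have sne: "supp \<gamma> \<noteq> {}" using \<gamma>(2) unfolding supp_def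
      by (auto simp: Finite_Cartesian_Product.vec_eq_iff)
    define t where "t = Min ((\<lambda>e. \<bar>v$e\<bar>) ` supp \<gamma>)"
    have "t \<in> (\<lambda>e. \<bar>v$e\<bar>) ` supp \<gamma>" unfolding t_def using sne by (intro Min_in) auto
    then obtain e1 where e1: "e1 \<in> supp \<gamma>" "t = \<bar>v$e1\<bar>" by blast
    have tle: "t \<le> \<bar>v$e\<bar>" if "e \<in> supp \<gamma>" for e unfolding t_def using that by auto
    have gs: "\<gamma>$e = sgn (v$e)" if "e \<in> supp \<gamma>" for e
    proof -
      have ne: "\<gamma>$e \<noteq> 0" using that unfolding supp_def by auto
      then have p: "\<gamma>$e * v$e > 0" using \<gamma>(3) unfolding conf_def by auto
      have "\<gamma>$e = 1 \<or> \<gamma>$e = -1" using Xi_pm1[OF \<gamma>(1), of e] ne by auto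
      then show ?thesis using p by (auto simp: sgn_if zero_less_mult_iff)
    qed
    have vne: "v$e \<noteq> 0" if "e \<in> supp \<gamma>" for e using gs[OF that] that unfolding supp_def by auto
    have tpos: "t > 0" using e1 vne by auto
    define v' where "v' = v - t *\<^sub>R \<gamma>"
    have v'flow: "v' \<in> flows M" using less.prems Xi_flows[OF \<gamma>(1)] unfolding v'_def flows_def
      by (simp add: matrix_vector_mult_diff_distrib matrix_vector_mult_scaleR)
    have cv': "conf v' v" unfolding conf_def
    proof (intro allI impI)
      fix e assume ne: "v'$e \<noteq> 0"
      show "v'$e * v$e > 0"
      proof (cases "e \<in> supp \<gamma>")
        case True
        have "v'$e * v$e = v$e * v$e - t * (sgn (v$e) * v$e)" unfolding v'_def using gs[OF True]
          by (simp add: algebra_simps)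
        also have "\<dots> = \<bar>v$e\<bar> * (\<bar>v$e\<bar> - t)"
          by (cases "v$e > 0") (auto simp: sgn_if abs_if algebra_simps)
        finally have "v'$e * v$e \<ge> 0" using tle[OF True] by simp
        moreover have "v$e \<noteq> 0" using vne True by auto
        ultimately show ?thesis using ne by (simp add: less_le)
      next
        case False
        then have "\<gamma>$e = 0" unfolding supp_def by auto
        then have "v'$e = v$e" unfolding v'_def by simp
        then show ?thesis using ne by (simp add: zero_less_mult_iff) (meson linorder_neqE_linordered_idom)
      qed
    qed
    have "v'$e1 = 0" unfolding v'_def using gs[OF e1(1)] e1(2) by (simp add: abs_mult_sgn mult.commute)
    moreover have "e1 \<in> supp v" using vne[OF e1(1)] unfolding supp_def by auto
    ultimately have "supp v' \<subset> supp v" using conf_supp[OF cv'] unfolding supp_def by auto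
    then have "card (supp v') < card (supp v)" by (simp add: psubset_card_mono)
    from less.hyps[OF this v'flow] obtain \<alpha>' where
      a': "\<forall>g. \<alpha>' g \<ge> 0" "\<forall>g\<in>lattice_circuits M. \<alpha>' g \<noteq> 0 \<longrightarrow> conf g v'"
         "v' = (\<Sum>g\<in>lattice_circuits M. \<alpha>' g *\<^sub>R g)" by blast
    define \<alpha> where "\<alpha> g = \<alpha>' g + (if g = \<gamma> then t else 0)" for g
    have "(\<Sum>g\<in>lattice_circuits M. \<alpha> g *\<^sub>R g)
        = (\<Sum>g\<in>lattice_circuits M. \<alpha>' g *\<^sub>R g) + (\<Sum>g\<in>lattice_circuits M. (if g = \<gamma> then t *\<^sub>R \<gamma> else 0))"
      unfolding \<alpha>_def by (simp add: scaleR_add_left sum.distrib if_distrib[of "\<lambda>c. c *\<^sub>R _"] cong: if_cong)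
    also have "\<dots> = v' + t *\<^sub>R \<gamma>" using \<gamma>(1) finite_Xi[of M] a'(3) by simp
    also have "\<dots> = v" unfolding v'_def by simp
    finally have sumv: "v = (\<Sum>g\<in>lattice_circuits M. \<alpha> g *\<^sub>R g)" by simp
    have "\<forall>g. \<alpha> g \<ge> 0" using a'(1) tpos unfolding \<alpha>_def by auto
    moreover have "\<forall>g\<in>lattice_circuits M. \<alpha> g \<noteq> 0 \<longrightarrow> conf g v"
    proof (intro ballI impI)
      fix g assume g: "g \<in> lattice_circuits M" "\<alpha> g \<noteq> 0"
      show "conf g v"
      proof (cases "g = \<gamma>")
        case True then show ?thesis using \<gamma>(3) by simp
      next
        case False
        then have "\<alpha>' g \<noteq> 0" using g(2) unfolding \<alpha>_def by simp
        then show ?thesis using a'(2) g(1) conf_trans cv' by blast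
      qed
    qed
    ultimately show ?thesis using sumv by blast
  qed
qed

lemma decomp2:
  assumes TU: "totally_unimodular M" and v: "v \<in> flows M"
  obtains \<alpha> where "\<And>g. \<alpha> g \<ge> 0" "\<And>g. g \<in> lattice_circuits M \<Longrightarrow> \<alpha> g \<noteq> 0 \<Longrightarrow> conf g v"
     "v = (\<Sum>g\<in>lattice_circuits M. \<alpha> g *\<^sub>R g)"
     "l1 v = (\<Sum>g\<in>lattice_circuits M. \<alpha> g * l1 g)"
     "\<And>x. x \<bullet> v = (\<Sum>g\<in>lattice_circuits M. \<alpha> g * (x \<bullet> g))"
proof -
  obtain \<alpha> where a: "\<forall>g. \<alpha> g \<ge> 0" "\<forall>g\<in>lattice_circuits M. \<alpha> g \<noteq> 0 \<longrightarrow> conf g v"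
     "v = (\<Sum>g\<in>lattice_circuits M. \<alpha> g *\<^sub>R g)" using decomp[OF TU v] by blast
  have "l1 v = (\<Sum>e\<in>UNIV. sgn (v$e) * v$e)" by (rule l1_sgn)
  also have "\<dots> = (\<Sum>e\<in>UNIV. sgn (v$e) * (\<Sum>g\<in>lattice_circuits M. \<alpha> g * g$e))"
    by (subst a(3)) (simp add: Finite_Cartesian_Product.sum_component)
  also have "\<dots> = (\<Sum>g\<in>lattice_circuits M. \<alpha> g * (\<Sum>e\<in>UNIV. sgn (v$e) * g$e))"
  proof -
    have "(\<Sum>e\<in>UNIV. sgn (v$e) * (\<Sum>g\<in>lattice_circuits M. \<alpha> g * g$e))
        = (\<Sum>e\<in>UNIV. \<Sum>g\<in>lattice_circuits M. \<alpha> g * (sgn (v$e) * g$e))"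
      by (simp add: sum_distrib_left mult.left_commute)
    also have "\<dots> = (\<Sum>g\<in>lattice_circuits M. \<Sum>e\<in>UNIV. \<alpha> g * (sgn (v$e) * g$e))"
      by (rule sum.swap)
    also have "\<dots> = (\<Sum>g\<in>lattice_circuits M. \<alpha> g * (\<Sum>e\<in>UNIV. sgn (v$e) * g$e))"
      by (simp add: sum_distrib_left)
    finally show ?thesis .
  qed
  also have "\<dots> = (\<Sum>g\<in>lattice_circuits M. \<alpha> g * l1 g)"
  proof (rule sum.cong)
    fix g assume g: "g \<in> lattice_circuits M"
    show "\<alpha> g * (\<Sum>e\<in>UNIV. sgn (v$e) * g$e) = \<alpha> g * l1 g"
    proof (cases "\<alpha> g = 0")
      case False
      then have "conf g v" using a(2) g by auto
      then show ?thesis unfolding l1_def using conf_sgn[of g v] by simp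
    qed simp
  qed simp
  finally have l: "l1 v = (\<Sum>g\<in>lattice_circuits M. \<alpha> g * l1 g)" .
  have i: "x \<bullet> v = (\<Sum>g\<in>lattice_circuits M. \<alpha> g * (x \<bullet> g))" for x
    by (subst a(3)) (simp add: inner_sum_right)
  show ?thesis using that a l i by blast
qed




lemma norm_diff_sq: "(norm (x - g))^2 = (norm x)^2 - 2 * (x \<bullet> g) + (norm g)^2" for x g :: "real^'e"
  by (simp add: power2_norm_eq_inner inner_diff_left inner_diff_right inner_commute algebra_simps)

lemma V0_flows: "voronoi0 M \<subseteq> flows M" unfolding voronoi0_def by auto

lemma V0_circ: assumes "x \<in> voronoi0 M" "g \<in> lattice_circuits M" shows "2 * (x \<bullet> g) \<le> (norm g)^2"
proof -
  have "g \<in> flow_lattice M" using assms(2) unfolding lattice_circuits_def by auto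
  then have "norm x \<le> norm (x - g)" using assms(1) unfolding voronoi0_def by auto
  then have "(norm x)^2 \<le> (norm (x - g))^2" by (simp add: power_mono)
  then show ?thesis unfolding norm_diff_sq by simp
qed

lemma gbound:
  assumes TU: "totally_unimodular M" and c: "\<forall>g\<in>lattice_circuits M. 2 * (x \<bullet> g) \<le> (norm g)^2"
    and v: "v \<in> flows M"
  shows "2 * (x \<bullet> v) \<le> l1 v"
proof -
  obtain \<alpha> where a0: "\<And>g. \<alpha> g \<ge> 0" "\<And>g. g \<in> lattice_circuits M \<Longrightarrow> \<alpha> g \<noteq> 0 \<Longrightarrow> conf g v"
     "v = (\<Sum>g\<in>lattice_circuits M. \<alpha> g *\<^sub>R g)"
     "l1 v = (\<Sum>g\<in>lattice_circuits M. \<alpha> g * l1 g)"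
     "\<And>x. x \<bullet> v = (\<Sum>g\<in>lattice_circuits M. \<alpha> g * (x \<bullet> g))"
    by (rule decomp2[OF TU v]) blast
  note a = a0(1) a0(4) a0(5)[of x]
  have "2 * (x \<bullet> v) = (\<Sum>g\<in>lattice_circuits M. \<alpha> g * (2 * (x \<bullet> g)))"
    unfolding a(3) by (simp add: sum_distrib_left algebra_simps)
  also have "\<dots> \<le> (\<Sum>g\<in>lattice_circuits M. \<alpha> g * l1 g)"
  proof (rule sum_mono)
    fix g assume g: "g \<in> lattice_circuits M"
    have "2 * (x \<bullet> g) \<le> l1 g" using c g Xi_norm[OF g] by auto
    then show "\<alpha> g * (2 * (x \<bullet> g)) \<le> \<alpha> g * l1 g" using a(1)[of g] by (rule mult_left_mono)
  qed
  finally show ?thesis using a(2) by simp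
qed

lemma int_abs_le_sq: assumes "(z::real) \<in> \<int>" shows "\<bar>z\<bar> \<le> z * z"
proof -
  obtain n where n: "z = of_int n" using assms by (auto elim: Ints_cases)
  have "\<bar>n\<bar> \<le> n * n"
  proof (cases "n = 0")
    case False then have "1 \<le> \<bar>n\<bar>" by simp
    then have "\<bar>n\<bar> * 1 \<le> \<bar>n\<bar> * \<bar>n\<bar>" by (intro mult_left_mono) auto
    then show ?thesis by (simp add: abs_mult_self_eq)
  qed simp
  then have "real_of_int \<bar>n\<bar> \<le> real_of_int (n * n)" by linarith
  then show ?thesis unfolding n by simp
qed

lemma V0_char:
  assumes TU: "totally_unimodular M" and x: "x \<in> flows M"
    and c: "\<forall>g\<in>lattice_circuits M. 2 * (x \<bullet> g) \<le> (norm g)^2"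
  shows "x \<in> voronoi0 M"
  unfolding voronoi0_def
proof (intro CollectI conjI ballI x)
  fix l assume l: "l \<in> flow_lattice M"
  have lf: "l \<in> flows M" using l unfolding flow_lattice_def by auto
  have "l1 l \<le> (norm l)^2"
  proof -
    have "l1 l = (\<Sum>e\<in>UNIV. \<bar>l$e\<bar>)" unfolding l1_def ..
    also have "\<dots> \<le> (\<Sum>e\<in>UNIV. l$e * l$e)"
      using l int_abs_le_sq unfolding flow_lattice_def by (intro sum_mono) auto
    also have "\<dots> = (norm l)^2" by (simp add: power2_norm_eq_inner inner_vec_def)
    finally show ?thesis .
  qed
  moreover have "2 * (x \<bullet> l) \<le> l1 l" using gbound[OF TU c lf] .
  ultimately have "(norm x)^2 \<le> (norm (x - l))^2" unfolding norm_diff_sq by simp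
  then show "norm x \<le> norm (x - l)" by (rule power2_le_imp_le) simp
qed




lemma span_eq:
  fixes M :: "real^'e^'r" and F :: "(real^'e) set"
  assumes TU: "totally_unimodular M" and face: "F face_of voronoi0 M" and ne: "F \<noteq> {}"
  shows "{x. supp x \<subseteq> (\<Union>g\<in>Ucirc M F. supp g) \<and> M *v x = 0} = span (Ucirc M F)"
proof -
  define U where "U = Ucirc M F"
  define S where "S = (\<Union>g\<in>U. supp g)"
  define K where "K = {x :: real^'e. supp x \<subseteq> S \<and> M *v x = 0}"
  have FV: "F \<subseteq> voronoi0 M" using face by (rule face_of_imp_subset)
  have Ff: "F \<subseteq> flows M" using FV V0_flows by blast
  have UXi: "U \<subseteq> lattice_circuits M" unfolding U_def Ucirc_def by auto
  have finU: "finite U" using finite_subset[OF UXi finite_Xi] .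
  have cons: "\<forall>g\<in>lattice_circuits M. 2*(x \<bullet> g) \<le> (norm g)^2" if "x \<in> F" for x
    using V0_circ FV that by blast
  have tight: "2*(x \<bullet> g) = (norm g)^2" if "x \<in> F" "g \<in> U" for x g
    using that unfolding U_def Ucirc_def Fgamma_def by auto
  have subK: "subspace K" unfolding subspace_def K_def supp_def
  proof (intro conjI ballI allI)
    fix x y :: "real^'e" assume a: "x \<in> {x. {e. x $ e \<noteq> 0} \<subseteq> S \<and> M *v x = 0}" "y \<in> {x. {e. x $ e \<noteq> 0} \<subseteq> S \<and> M *v x = 0}"
    then have "\<And>t. t \<notin> S \<Longrightarrow> x$t = 0 \<and> y$t = 0" by auto
    then have "{e. (x + y) $ e \<noteq> 0} \<subseteq> S" by (auto, metis add.right_neutral)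
    then show "x + y \<in> {x. {e. x $ e \<noteq> 0} \<subseteq> S \<and> M *v x = 0}" using a by (simp add: matrix_vector_right_distrib)
  next
    fix c and x :: "real^'e" assume a: "x \<in> {x. {e. x $ e \<noteq> 0} \<subseteq> S \<and> M *v x = 0}"
    then show "c *\<^sub>R x \<in> {x. {e. x $ e \<noteq> 0} \<subseteq> S \<and> M *v x = 0}" by (auto simp: matrix_vector_mult_scaleR)
  qed auto
  have UK: "U \<subseteq> K" unfolding K_def S_def using Xi_flows UXi unfolding flows_def by blast
  have "span U \<subseteq> K" by (rule span_minimal[OF UK subK])
  moreover have "K \<subseteq> span U"
  proof
    fix z assume z: "z \<in> K"
    obtain x0 where x0: "x0 \<in> F" using ne by auto
    define y where "y = (\<Sum>g\<in>U. g)"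
    have yflow: "y \<in> flows M" unfolding y_def
      by (rule subspace_sum[OF flows_subspace]) (use UXi Xi_flows in blast)
    have ycomp: "y$e = (\<Sum>g\<in>U. g$e)" for e unfolding y_def by (simp add: Finite_Cartesian_Product.sum_component)
    have l1U: "(\<Sum>g\<in>U. l1 g) = (\<Sum>e\<in>UNIV. \<Sum>g\<in>U. \<bar>g$e\<bar>)" unfolding l1_def by (rule sum.swap)
    have xy: "2*(x \<bullet> y) = (\<Sum>g\<in>U. l1 g)" if "x \<in> F" for x
    proof -
      have "2*(x \<bullet> y) = (\<Sum>g\<in>U. 2*(x \<bullet> g))" unfolding y_def by (simp add: inner_sum_right sum_distrib_left)
      also have "\<dots> = (\<Sum>g\<in>U. l1 g)"
      proof (rule sum.cong)
        fix g assume g: "g \<in> U"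
        show "2*(x \<bullet> g) = l1 g" using tight[OF that g] Xi_norm[of g M] UXi g by auto
      qed simp
      finally show ?thesis .
    qed
    have le: "\<bar>y$e\<bar> \<le> (\<Sum>g\<in>U. \<bar>g$e\<bar>)" for e unfolding ycomp by (rule sum_abs)
    have absU: "\<bar>y$e\<bar> = (\<Sum>g\<in>U. \<bar>g$e\<bar>)" for e
    proof -
      have "(\<Sum>g\<in>U. l1 g) \<le> l1 y" using gbound[OF TU cons[OF x0] yflow] xy[OF x0] by simp
      then have "(\<Sum>e\<in>UNIV. \<Sum>g\<in>U. \<bar>g$e\<bar>) \<le> (\<Sum>e\<in>UNIV. \<bar>y$e\<bar>)" using l1U unfolding l1_def by linarith
      then have s0: "(\<Sum>e\<in>UNIV. (\<Sum>g\<in>U. \<bar>g$e\<bar>) - \<bar>y$e\<bar>) \<le> 0" by (simp add: sum_subtractf)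
      have nn: "\<forall>e\<in>UNIV. (\<Sum>g\<in>U. \<bar>g$e\<bar>) - \<bar>y$e\<bar> \<ge> 0" using le by auto
      then have "(\<Sum>e\<in>UNIV. (\<Sum>g\<in>U. \<bar>g$e\<bar>) - \<bar>y$e\<bar>) \<ge> 0" by (intro sum_nonneg) auto
      with s0 have "(\<Sum>e\<in>UNIV. (\<Sum>g\<in>U. \<bar>g$e\<bar>) - \<bar>y$e\<bar>) = 0" by linarith
      then have "\<forall>e\<in>UNIV. (\<Sum>g\<in>U. \<bar>g$e\<bar>) - \<bar>y$e\<bar> = 0"
        using sum_nonneg_eq_0_iff[of UNIV "\<lambda>e. (\<Sum>g\<in>U. \<bar>g$e\<bar>) - \<bar>y$e\<bar>"] nn by simp
      then show ?thesis by simp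
    qed
    have l1y: "l1 y = (\<Sum>g\<in>U. l1 g)" using l1U absU unfolding l1_def by simp
    have gy0: "l1 y - 2*(x \<bullet> y) = 0" if "x \<in> F" for x using xy[OF that] l1y by simp
    have ybig: "1 \<le> \<bar>y$e\<bar>" if eS: "e \<in> S" for e
    proof -
      obtain g where g: "g \<in> U" "g$e \<noteq> 0" using eS unfolding S_def supp_def by auto
      have "g$e \<in> {-1, 0, 1}" using Xi_pm1[of g M e] UXi g by auto
      then have "\<bar>g$e\<bar> = 1" using g(2) by auto
      moreover have "\<bar>g$e\<bar> \<le> (\<Sum>h\<in>U. \<bar>h$e\<bar>)" using member_le_sum[of g U "\<lambda>h. \<bar>h$e\<bar>"] g(1) finU by auto
      ultimately show ?thesis using absU by simp
    qed
    have y0: "y$e = 0" if "e \<notin> S" for e unfolding ycomp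
      by (rule sum.neutral) (use that in \<open>auto simp: S_def supp_def\<close>)
    have zS: "z$e = 0" if "e \<notin> S" for e using z that unfolding K_def supp_def by auto
    have zflow: "z \<in> flows M" using z unfolding K_def flows_def by auto
    define kk where "kk = l1 z + 1"
    have zle: "\<bar>z$e\<bar> < kk" for e
    proof -
      have "\<bar>z$e\<bar> \<le> l1 z" unfolding l1_def by (rule member_le_sum) auto
      then show ?thesis unfolding kk_def by simp
    qed
    have kpos: "kk > 0" using zle[of undefined] by linarith
    have sgnw: "sgn (s * z$e + kk * y$e) = sgn (y$e)" if s: "s = 1 \<or> s = -1" for s e
    proof (cases "e \<in> S")
      case False then show ?thesis using y0 zS by simp
    next
      case True
      have b: "1 \<le> \<bar>y$e\<bar>" using ybig[OF True] .
      have zz: "\<bar>s * z$e\<bar> < kk" using zle[of e] s by auto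
      show ?thesis
      proof (cases "y$e > 0")
        case True
        then have "kk * 1 \<le> kk * y$e" using b kpos by (intro mult_left_mono) auto
        moreover have "- (s * z$e) < kk" using zz by (simp add: abs_less_iff)
        ultimately have "s * z$e + kk * y$e > 0" by linarith
        then show ?thesis using True by simp
      next
        case False
        then have yn: "y$e < 0" using b by auto
        then have "kk * y$e \<le> kk * (-1)" using b kpos by (intro mult_left_mono) auto
        moreover have "s * z$e < kk" using zz by (simp add: abs_less_iff)
        ultimately have "s * z$e + kk * y$e < 0" by linarith
        then show ?thesis using yn by simp
      qed
    qed
    define h0 where "h0 = (\<Sum>e\<in>UNIV. sgn (y$e) * z$e)"
    have l1w: "l1 (s *\<^sub>R z + kk *\<^sub>R y) = s * h0 + kk * l1 y" if s: "s = 1 \<or> s = -1" for s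
    proof -
      have "l1 (s *\<^sub>R z + kk *\<^sub>R y) = (\<Sum>e\<in>UNIV. sgn (s * z$e + kk * y$e) * (s * z$e + kk * y$e))"
        by (simp add: l1_sgn)
      also have "\<dots> = (\<Sum>e\<in>UNIV. s * (sgn (y$e) * z$e) + kk * (sgn (y$e) * y$e))"
        using sgnw[OF s] by (simp add: algebra_simps)
      also have "\<dots> = s * h0 + kk * l1 y"
        unfolding h0_def l1_sgn[of y] by (simp add: sum.distrib sum_distrib_left)
      finally show ?thesis .
    qed
    have wflow: "s *\<^sub>R z + kk *\<^sub>R y \<in> flows M" for s
      using zflow yflow flows_subspace[of M] by (simp add: subspace_add subspace_scale)
    have h0z: "h0 - 2*(x \<bullet> z) = 0" if x: "x \<in> F" for x
    proof -
      have e: "l1 (s *\<^sub>R z + kk *\<^sub>R y) - 2*(x \<bullet> (s *\<^sub>R z + kk *\<^sub>R y)) = s * (h0 - 2*(x \<bullet> z))"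
        if s: "s = 1 \<or> s = -1" for s
      proof -
        have "l1 (s *\<^sub>R z + kk *\<^sub>R y) - 2*(x \<bullet> (s *\<^sub>R z + kk *\<^sub>R y))
            = s * (h0 - 2*(x \<bullet> z)) + kk * (l1 y - 2*(x \<bullet> y))"
          unfolding l1w[OF s] by (simp add: inner_add_right algebra_simps)
        then show ?thesis using gy0[OF x] by simp
      qed
      have "0 \<le> 1 * (h0 - 2*(x \<bullet> z))" using gbound[OF TU cons[OF x] wflow[of 1]] e[of 1] by simp
      moreover have "0 \<le> (-1) * (h0 - 2*(x \<bullet> z))" using gbound[OF TU cons[OF x] wflow[of "-1"]] e[of "-1"] by simp
      ultimately show ?thesis by simp
    qed
    define w where "w = z + kk *\<^sub>R y"
    have wf: "w \<in> flows M" using wflow[of 1] unfolding w_def by simp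
    have gw0: "l1 w - 2*(x \<bullet> w) = 0" if x: "x \<in> F" for x
    proof -
      have "l1 w - 2*(x \<bullet> w) = h0 - 2*(x \<bullet> z) + kk * (l1 y - 2*(x \<bullet> y))"
        using l1w[of 1] unfolding w_def by (simp add: inner_add_right algebra_simps)
      then show ?thesis using gy0[OF x] h0z[OF x] by simp
    qed
    obtain \<alpha> where a: "\<And>g. \<alpha> g \<ge> 0" "\<And>g. g \<in> lattice_circuits M \<Longrightarrow> \<alpha> g \<noteq> 0 \<Longrightarrow> conf g w"
     "w = (\<Sum>g\<in>lattice_circuits M. \<alpha> g *\<^sub>R g)"
     "l1 w = (\<Sum>g\<in>lattice_circuits M. \<alpha> g * l1 g)"
     "\<And>x. x \<bullet> w = (\<Sum>g\<in>lattice_circuits M. \<alpha> g * (x \<bullet> g))"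
      by (rule decomp2[OF TU wf]) blast
    have aU: "g \<in> U" if g: "g \<in> lattice_circuits M" "\<alpha> g \<noteq> 0" for g
    proof -
      have "F \<subseteq> Fgamma M g"
      proof
        fix x assume x: "x \<in> F"
        have nn: "\<forall>h\<in>lattice_circuits M. 0 \<le> \<alpha> h * (l1 h - 2*(x \<bullet> h))"
        proof
          fix h assume h: "h \<in> lattice_circuits M"
          have "2*(x \<bullet> h) \<le> l1 h" using cons[OF x] h Xi_norm[OF h] by auto
          then show "0 \<le> \<alpha> h * (l1 h - 2*(x \<bullet> h))" using a(1)[of h] by simp
        qed
        have "(\<Sum>h\<in>lattice_circuits M. \<alpha> h * (l1 h - 2*(x \<bullet> h))) = l1 w - 2*(x \<bullet> w)"
          unfolding a(4) a(5) by (simp add: algebra_simps sum_subtractf sum_distrib_left)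
        also have "\<dots> = 0" using gw0[OF x] .
        finally have "\<forall>h\<in>lattice_circuits M. \<alpha> h * (l1 h - 2*(x \<bullet> h)) = 0"
          using sum_nonneg_eq_0_iff[OF finite_Xi[of M], of "\<lambda>h. \<alpha> h * (l1 h - 2*(x \<bullet> h))"] nn by blast
        then have "\<alpha> g * (l1 g - 2*(x \<bullet> g)) = 0" using g(1) by blast
        then have "2*(x \<bullet> g) = (norm g)^2" using g(2) Xi_norm[OF g(1)] by simp
        then show "x \<in> Fgamma M g" unfolding Fgamma_def using x Ff by auto
      qed
      then show ?thesis unfolding U_def Ucirc_def using g(1) by auto
    qed
    have wspan: "w \<in> span U" unfolding a(3)
    proof (rule span_sum)
      fix g assume g: "g \<in> lattice_circuits M"
      show "\<alpha> g *\<^sub>R g \<in> span U"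
      proof (cases "\<alpha> g = 0")
        case False then show ?thesis using aU[OF g False] by (intro span_scale span_base)
      qed (simp add: span_zero)
    qed
    have yspan: "y \<in> span U" unfolding y_def by (intro span_sum span_base)
    have "z = w - kk *\<^sub>R y" unfolding w_def by simp
    also have "\<dots> \<in> span U" using wspan yspan by (intro span_diff span_scale)
    finally show "z \<in> span U" .
  qed
  ultimately show ?thesis unfolding K_def S_def U_def by blast
qed




lemma aff_dim_face:
  fixes M :: "real^'e^'r" and F :: "(real^'e) set"
  assumes TU: "totally_unimodular M" and face: "F face_of voronoi0 M" and ne: "F \<noteq> {}"
  shows "aff_dim F = int (dim {y \<in> flows M. \<forall>a\<in>span (Ucirc M F). Linear_Algebra.orthogonal a y})"
proof -
  define U where "U = Ucirc M F"
  define D where "D = {y \<in> flows M. \<forall>a\<in>span U. Linear_Algebra.orthogonal a y}"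
  define R where "R = lattice_circuits M - U"
  have FV: "F \<subseteq> voronoi0 M" using face by (rule face_of_imp_subset)
  have Ff: "F \<subseteq> flows M" using FV V0_flows by blast
  have UXi: "U \<subseteq> lattice_circuits M" unfolding U_def Ucirc_def by auto
  have finR: "finite R" unfolding R_def using finite_Xi by blast
  have cons: "\<forall>g\<in>lattice_circuits M. 2*(x \<bullet> g) \<le> (norm g)^2" if "x \<in> F" for x
    using V0_circ FV that by blast
  have tight: "2*(x \<bullet> g) = (norm g)^2" if "x \<in> F" "g \<in> U" for x g
    using that unfolding U_def Ucirc_def Fgamma_def by auto
  have convF: "convex F" using face by (rule face_of_imp_convex)
  have subD: "subspace D"
  proof -
    have "D = flows M \<inter> {y. \<forall>a\<in>span U. Linear_Algebra.orthogonal a y}" unfolding D_def by auto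
    then show ?thesis using subspace_inter[OF flows_subspace subspace_orthogonal_to_vectors] by simp
  qed
  have "\<forall>g\<in>R. \<exists>p. p \<in> F \<and> 2*(p \<bullet> g) < (norm g)^2"
  proof
    fix g assume g: "g \<in> R"
    then have "\<not> F \<subseteq> Fgamma M g" unfolding R_def U_def Ucirc_def by auto
    then obtain p where p: "p \<in> F" "p \<notin> Fgamma M g" by auto
    then have "2*(p \<bullet> g) \<noteq> (norm g)^2" using Ff unfolding Fgamma_def by auto
    moreover have "2*(p \<bullet> g) \<le> (norm g)^2" using cons[OF p(1)] g unfolding R_def by auto
    ultimately show "\<exists>p. p \<in> F \<and> 2*(p \<bullet> g) < (norm g)^2" using p(1) by auto
  qed
  then obtain p where p: "\<And>g. g \<in> R \<Longrightarrow> p g \<in> F" "\<And>g. g \<in> R \<Longrightarrow> 2*(p g \<bullet> g) < (norm g)^2"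
    by metis
  obtain x0 where x0: "x0 \<in> F" using ne by auto
  define n where "n = card R"
  define x1 where "x1 = (if R = {} then x0 else (\<Sum>g\<in>R. (1 / real n) *\<^sub>R p g))"
  have x1F: "x1 \<in> F"
  proof (cases "R = {}")
    case True then show ?thesis using x0 unfolding x1_def by simp
  next
    case False
    then have npos: "n > 0" unfolding n_def using finR by (simp add: card_gt_0_iff)
    have "(\<Sum>g\<in>R. (1 / real n) *\<^sub>R p g) \<in> F"
      by (rule convex_sum[OF finR convF]) (use npos p(1) in \<open>auto simp: n_def\<close>)
    then show ?thesis using False unfolding x1_def by simp
  qed
  have x1flow: "x1 \<in> flows M" using x1F Ff by auto
  have x1strict: "2*(x1 \<bullet> g) < (norm g)^2" if g: "g \<in> R" for g
  proof -
    have Rne: "R \<noteq> {}" using g by auto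
    then have npos: "n > 0" unfolding n_def using finR by (simp add: card_gt_0_iff)
    have "2*(x1 \<bullet> g) = (\<Sum>h\<in>R. (1 / real n) * (2*(p h \<bullet> g)))"
      unfolding x1_def using Rne by (simp add: inner_sum_left sum_distrib_left algebra_simps)
    also have "\<dots> < (\<Sum>h\<in>R. (1 / real n) * (norm g)^2)"
    proof (rule sum_strict_mono_ex1[OF finR])
      show "\<forall>h\<in>R. (1 / real n) * (2*(p h \<bullet> g)) \<le> (1 / real n) * (norm g)^2"
      proof
        fix h assume h: "h \<in> R"
        have "2*(p h \<bullet> g) \<le> (norm g)^2" using cons[OF p(1)[OF h]] g unfolding R_def by auto
        then show "(1 / real n) * (2*(p h \<bullet> g)) \<le> (1 / real n) * (norm g)^2"
          by (intro mult_left_mono) auto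
      qed
      show "\<exists>h\<in>R. (1 / real n) * (2*(p h \<bullet> g)) < (1 / real n) * (norm g)^2"
        using p(2)[OF g] npos g by (intro bexI[of _ g]) (auto simp: divide_strict_right_mono)
    qed
    also have "\<dots> = (norm g)^2" using npos unfolding n_def by simp
    finally show ?thesis .
  qed
  define Opn where "Opn = (\<Inter>g\<in>R. {d. g \<bullet> d < ((norm g)^2 - 2*(x1 \<bullet> g)) / 2})"
  have "open Opn" unfolding Opn_def using finR by (intro open_INT ballI open_halfspace_lt) auto
  moreover have "0 \<in> Opn" unfolding Opn_def using x1strict by auto
  ultimately obtain r where r: "r > 0" "ball 0 r \<subseteq> Opn" by (meson open_contains_ball)
  have inV: "x1 + d \<in> voronoi0 M" if d: "d \<in> D" "norm d < r" for d
  proof (rule V0_char[OF TU])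
    show "x1 + d \<in> flows M" using x1flow d(1) flows_subspace[of M] unfolding D_def by (simp add: subspace_add)
    show "\<forall>g\<in>lattice_circuits M. 2 * ((x1 + d) \<bullet> g) \<le> (norm g)^2"
    proof
      fix g assume g: "g \<in> lattice_circuits M"
      show "2 * ((x1 + d) \<bullet> g) \<le> (norm g)^2"
      proof (cases "g \<in> U")
        case True
        then have "g \<in> span U" by (rule span_base)
        then have "Linear_Algebra.orthogonal g d" using d(1) unfolding D_def by auto
        then have "d \<bullet> g = 0" unfolding Linear_Algebra.orthogonal_def by (simp add: inner_commute)
        then show ?thesis using tight[OF x1F True] by (simp add: inner_add_left)
      next
        case False
        then have gR: "g \<in> R" using g unfolding R_def by auto
        have "d \<in> Opn" using r(2) d(2) by (auto simp: dist_norm)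
        then have "g \<bullet> d < ((norm g)^2 - 2*(x1 \<bullet> g)) / 2" unfolding Opn_def using gR by auto
        then show ?thesis by (simp add: inner_add_left inner_add_right inner_commute)
      qed
    qed
  qed
  have inF: "x1 + d \<in> F" if d: "d \<in> D" "norm d < r" for d
  proof (cases "d = 0")
    case True then show ?thesis using x1F by simp
  next
    case False
    have a: "x1 + d \<in> voronoi0 M" using inV[OF d] .
    have "-d \<in> D" using d(1) subD by (simp add: subspace_neg)
    then have b: "x1 - d \<in> voronoi0 M" using inV[of "-d"] d(2) by simp
    have "(x1 + d) - (x1 - d) = 2 *\<^sub>R d" by (simp add: scaleR_2)
    then have "x1 + d \<noteq> x1 - d" using False by (metis diff_self scaleR_eq_0_iff zero_neq_numeral)
    then have "midpoint (x1 + d) (x1 - d) \<in> open_segment (x1 + d) (x1 - d)" by simp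
    moreover have "midpoint (x1 + d) (x1 - d) = x1" unfolding midpoint_def by (simp add: scaleR_add_right scaleR_diff_right)
    ultimately have "x1 \<in> open_segment (x1 + d) (x1 - d)" by simp
    then show ?thesis using face a b x1F unfolding face_of_def by blast
  qed
  define T where "T = (+) (- x1) ` F"
  have affT: "aff_dim F = int (dim T)" unfolding T_def by (rule aff_dim_eq_dim) (rule hull_inc[OF x1F])
  have TD: "T \<subseteq> D"
  proof
    fix t assume "t \<in> T"
    then obtain x where x: "x \<in> F" "t = - x1 + x" unfolding T_def by auto
    have tf: "t \<in> flows M" using x x1flow Ff flows_subspace[of M]
      by (simp add: subspace_diff subset_iff)
    have og: "Linear_Algebra.orthogonal t g" if g: "g \<in> U" for g
    proof -
      have "t \<bullet> g = x \<bullet> g - x1 \<bullet> g" unfolding x(2) by (simp add: inner_diff_left)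
      also have "\<dots> = 0" using tight[OF x(1) g] tight[OF x1F g] by simp
      finally show ?thesis unfolding Linear_Algebra.orthogonal_def .
    qed
    have "\<forall>a\<in>span U. Linear_Algebra.orthogonal a t"
    proof
      fix a assume "a \<in> span U"
      then have "Linear_Algebra.orthogonal t a" by (rule orthogonal_to_span) (rule og)
      then show "Linear_Algebra.orthogonal a t" by (simp add: orthogonal_commute)
    qed
    then show "t \<in> D" unfolding D_def using tf by auto
  qed
  have "dim T \<le> dim D" using TD by (rule dim_subset)
  moreover have "dim D \<le> dim T"
  proof -
    have "D \<subseteq> span (D \<inter> ball 0 r)"
    proof
      fix d assume d: "d \<in> D"
      show "d \<in> span (D \<inter> ball 0 r)"
      proof (cases "d = 0")
        case True then show ?thesis by (simp add: span_zero)
      next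
        case False
        define c where "c = r / (2 * norm d)"
        have cpos: "c > 0" unfolding c_def using r(1) False by simp
        have "c *\<^sub>R d \<in> D" using subD d by (simp add: subspace_scale)
        moreover have "norm (c *\<^sub>R d) < r" unfolding c_def using r(1) False by simp
        ultimately have "c *\<^sub>R d \<in> D \<inter> ball 0 r" by (simp add: dist_norm)
        then have "(1 / c) *\<^sub>R (c *\<^sub>R d) \<in> span (D \<inter> ball 0 r)" by (intro span_scale span_base)
        then show ?thesis using cpos by simp
      qed
    qed
    moreover have "D \<inter> ball 0 r \<subseteq> T"
    proof
      fix d assume d: "d \<in> D \<inter> ball 0 r"
      then have "x1 + d \<in> F" using inF by (auto simp: dist_norm)
      then have "- x1 + (x1 + d) \<in> T" unfolding T_def by blast
      then show "d \<in> T" by simp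
    qed
    ultimately have "D \<subseteq> span T" using span_mono by blast
    then have "dim D \<le> dim (span T)" by (rule dim_subset)
    then show ?thesis by simp
  qed
  ultimately show ?thesis unfolding affT D_def U_def by simp
qed

theorem mainTheorem18:
  fixes M :: "real^'e^'r" and F :: "(real^'e) set"
  assumes "totally_unimodular M"
    and "F face_of voronoi0 M" and "F \<noteq> {}"
  shows "codim_in_flows M F = int (genus M (phi M F))"
proof -
  have g: "genus M (phi M F) = dim (span (Ucirc M F))"
    unfolding genus_def phi_def Let_def using span_eq[OF assms] by simp
  have sub: "span (Ucirc M F) \<subseteq> flows M"
    by (rule span_minimal[OF _ flows_subspace]) (auto simp: Ucirc_def Xi_flows)
  have d: "dim {y \<in> flows M. \<forall>a\<in>span (Ucirc M F). Linear_Algebra.orthogonal a y} + dim (span (Ucirc M F)) = dim (flows M)"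
    by (rule dim_subspace_orthogonal_to_vectors[OF subspace_span flows_subspace sub])
  show ?thesis unfolding codim_in_flows_def aff_dim_face[OF assms] g using d by linarith
qed


end
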